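(* Let $n\ge 5$. Then for every $1\le r\le n$, the set $N(W_r)$ (of size $n-1$) is not a strong resolving set of $L(n)$.
   Context: For $n\ge 5$, $H(n)$ is the graph with vertex set $V_1\cup V_2$, where $V_1=\{v_1,\dots,v_n\}$ and $V_2=\{v_iv_j: 1\le i<j\le n\}$, and $v_r$ is adjacent to $v_iv_j$ iff $r\in\{i,j\}$ (no other edges). $L(n)$ is the line graph of $H(n)$: its vertices are the edges $\{v_r,v_iv_j\}$ of $H(n)$ (with $r\in\{i,j\}$), two being adjacent iff they share an endpoint. For $1\le r\le n$, $W_r$ is the set of vertices of $L(n)$ of the form $\{v_r,v_iv_j\}$; it is a maximal clique of size $n-1$. $N(W_r)$ denotes the set of vertices of $L(n)$ not in $W_r$ adjacent to some vertex of $W_r$, i.e. $N(W_r)=\{\{v_k,v_iv_j\}: k\neq r,\ \{i,j\}=\{r,k\}\}$. A set $Q\subseteq V(G)$ is a strong resolving set of $G$ if for any two distinct vertices $p,q$ there is $s\in Q$ such that $p$ lies on some shortest $q$–$s$ path or $q$ lies on some shortest $p$–$s$ path. *)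

theory Defs
  imports Main
begin

definition walk :: "'a set \<Rightarrow> ('a \<Rightarrow> 'a \<Rightarrow> bool) \<Rightarrow> 'a list \<Rightarrow> bool" where
  "walk V adj xs \<longleftrightarrow> xs \<noteq> [] \<and> set xs \<subseteq> V \<and>
     (\<forall>i. Suc i < length xs \<longrightarrow> adj (xs ! i) (xs ! Suc i))"

definition gdist :: "'a set \<Rightarrow> ('a \<Rightarrow> 'a \<Rightarrow> bool) \<Rightarrow> 'a \<Rightarrow> 'a \<Rightarrow> nat" where
  "gdist V adj u v = (LEAST k. \<exists>xs. walk V adj xs \<and> hd xs = u \<and> last xs = v \<and> length xs = Suc k)"

definition shortest_path :: "'a set \<Rightarrow> ('a \<Rightarrow> 'a \<Rightarrow> bool) \<Rightarrow> 'a \<Rightarrow> 'a \<Rightarrow> 'a list \<Rightarrow> bool" where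
  "shortest_path V adj u v xs \<longleftrightarrow> walk V adj xs \<and> hd xs = u \<and> last xs = v \<and>
     length xs = Suc (gdist V adj u v)"

definition on_shortest :: "'a set \<Rightarrow> ('a \<Rightarrow> 'a \<Rightarrow> bool) \<Rightarrow> 'a \<Rightarrow> 'a \<Rightarrow> 'a \<Rightarrow> bool" where
  "on_shortest V adj p q s \<longleftrightarrow> (\<exists>xs. shortest_path V adj q s xs \<and> p \<in> set xs)"

definition strong_resolving_set :: "'a set \<Rightarrow> ('a \<Rightarrow> 'a \<Rightarrow> bool) \<Rightarrow> 'a set \<Rightarrow> bool" where
  "strong_resolving_set V adj Q \<longleftrightarrow> Q \<subseteq> V \<and>
     (\<forall>p\<in>V. \<forall>q\<in>V. p \<noteq> q \<longrightarrow>
        (\<exists>s\<in>Q. on_shortest V adj p q s \<or> on_shortest V adj q p s))"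

definition nbhd :: "'a set \<Rightarrow> ('a \<Rightarrow> 'a \<Rightarrow> bool) \<Rightarrow> 'a set \<Rightarrow> 'a set" where
  "nbhd V adj W = {x \<in> V - W. \<exists>w\<in>W. adj x w}"

(* L(n): the vertex {v_r, v_i v_j} of L(n) (an edge of H(n)) is encoded as the pair (r, {i,j}),
   with 1 <= i < j <= n and r \<in> {i,j}. *)
definition L_verts :: "nat \<Rightarrow> (nat \<times> nat set) set" where
  "L_verts n = {(r, e) | r e. \<exists>i j. 1 \<le> i \<and> i < j \<and> j \<le> n \<and> e = {i, j} \<and> r \<in> e}"

(* two distinct edges of H(n) are adjacent in L(n) iff they share an endpoint,
   i.e. the same vertex v_r of V_1 or the same vertex v_iv_j of V_2 *)
definition L_adj :: "nat \<times> nat set \<Rightarrow> nat \<times> nat set \<Rightarrow> bool" where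
  "L_adj x y \<longleftrightarrow> x \<noteq> y \<and> (fst x = fst y \<or> snd x = snd y)"

definition W :: "nat \<Rightarrow> nat \<Rightarrow> (nat \<times> nat set) set" where
  "W n r = {x \<in> L_verts n. fst x = r}"

end

theory Submission
  imports Defs
begin

lemma walk_single: "walk V adj [x] \<longleftrightarrow> x \<in> V"
  by (auto simp: walk_def)

lemma walk_Cons2: "walk V adj (x#y#xs) \<longleftrightarrow> x \<in> V \<and> adj x y \<and> walk V adj (y#xs)"
proof
  assume h: "walk V adj (x#y#xs)"
  have A: "\<forall>i. Suc i < length (x#y#xs) \<longrightarrow> adj ((x#y#xs) ! i) ((x#y#xs) ! Suc i)"
    using h unfolding walk_def by blast
  have "\<forall>i. Suc i < length (y#xs) \<longrightarrow> adj ((y#xs) ! i) ((y#xs) ! Suc i)"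
  proof (intro allI impI)
    fix i assume "Suc i < length (y#xs)"
    then have "Suc (Suc i) < length (x#y#xs)" by simp
    then have "adj ((x#y#xs) ! Suc i) ((x#y#xs) ! Suc (Suc i))" using A by blast
    then show "adj ((y#xs) ! i) ((y#xs) ! Suc i)" by simp
  qed
  moreover have "adj x y" using A[rule_format, of 0] by simp
  ultimately show "x \<in> V \<and> adj x y \<and> walk V adj (y#xs)" using h unfolding walk_def by simp
next
  assume h: "x \<in> V \<and> adj x y \<and> walk V adj (y#xs)"
  show "walk V adj (x#y#xs)" unfolding walk_def
  proof (intro conjI allI impI)
    fix i assume "Suc i < length (x#y#xs)"
    then show "adj ((x#y#xs) ! i) ((x#y#xs) ! Suc i)" using h unfolding walk_def
      by (cases i) auto
  qed (use h in \<open>auto simp: walk_def\<close>)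
qed

lemma gdist_le:
  assumes "walk V adj xs" "hd xs = u" "last xs = v" "length xs = Suc k"
  shows "gdist V adj u v \<le> k"
  unfolding gdist_def by (rule Least_le) (use assms in blast)

lemma key:
  assumes sp: "on_shortest V adj p q s"
    and "p \<noteq> q" "p \<noteq> s" "\<not> adj q p" "\<forall>w\<in>V. \<not> (adj q w \<and> adj w p)"
    and "gdist V adj q s \<le> 3"
  shows False
proof -
  obtain xs where xs: "shortest_path V adj q s xs" "p \<in> set xs"
    using sp unfolding on_shortest_def by blast
  then have w: "walk V adj xs" and h: "hd xs = q" and l: "last xs = s"
    and len: "length xs = Suc (gdist V adj q s)"
    unfolding shortest_path_def by auto
  obtain i where i: "i < length xs" "xs ! i = p" using xs(2) by (metis in_set_conv_nth)
  have ne: "xs \<noteq> []" using w unfolding walk_def by blast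
  have x0: "xs ! 0 = q" using h ne by (simp add: hd_conv_nth)
  have xl: "xs ! (length xs - 1) = s" using l ne by (simp add: last_conv_nth)
  have adjs: "\<And>j. Suc j < length xs \<Longrightarrow> adj (xs ! j) (xs ! Suc j)" using w unfolding walk_def by blast
  have setV: "set xs \<subseteq> V" using w unfolding walk_def by blast
  have "i \<noteq> 0" using i x0 assms(2) by (metis)
  moreover have "i \<noteq> 1" using i x0 adjs[of 0] assms(4) by auto
  moreover have "i \<noteq> 2"
  proof
    assume "i = 2"
    then have "1 < length xs" using i by simp
    then have "xs ! 1 \<in> V" using setV nth_mem by blast
    then show False using adjs[of 0] adjs[of 1] \<open>i = 2\<close> i x0 assms(5) by (auto simp: numeral_2_eq_2)
  qed
  moreover have "i \<noteq> length xs - 1" using i xl assms(3) by auto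
  ultimately show False using i len assms(6) by linarith
qed

lemma L_vert_mem:
  assumes xz: "x \<noteq> z" and xr: "1 \<le> x \<and> x \<le> n" and zr: "1 \<le> z \<and> z \<le> n"
  shows "(x, {x, z}) \<in> L_verts n"
proof -
  have mm: "{x, z} = {min x z, max x z}" by (cases "x \<le> z") (auto simp: min_def max_def insert_commute)
  show ?thesis unfolding L_verts_def
    apply (rule CollectI)
    apply (rule exI[of _ x], rule exI[of _ "{x,z}"])
    apply (rule conjI, rule refl)
    apply (rule exI[of _ "min x z"], rule exI[of _ "max x z"])
    using xr zr xz mm by auto
qed

lemma L_gdist_le3:
  assumes u: "u \<in> L_verts n" and v: "v \<in> L_verts n"
  shows "gdist (L_verts n) L_adj u v \<le> 3"
proof -
  obtain x e where ue: "u = (x, e)" by (cases u)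
  obtain z f where vf: "v = (z, f)" by (cases v)
  obtain i1 j1 where e: "1 \<le> i1" "i1 < j1" "j1 \<le> n" "e = {i1, j1}" "x \<in> e" using u ue unfolding L_verts_def by auto
  obtain i2 j2 where f: "1 \<le> i2" "i2 < j2" "j2 \<le> n" "f = {i2, j2}" "z \<in> f" using v vf unfolding L_verts_def by auto
  show ?thesis
  proof (cases "u = v")
    case True
    then show ?thesis using gdist_le[of "L_verts n" L_adj "[u]" u v 0] u by (simp add: walk_single)
  next
    case uv: False
    show ?thesis
    proof (cases "x = z")
      case True
      then show ?thesis using gdist_le[of "L_verts n" L_adj "[u,v]" u v 1] u v uv ue vf
        by (simp add: walk_single walk_Cons2 L_adj_def)
    next
      case xz: False
      define m1 where "m1 = (x, {x, z})"
      define m2 where "m2 = (z, {x, z})"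
      have xr: "1 \<le> x \<and> x \<le> n" using e by auto
      have zr: "1 \<le> z \<and> z \<le> n" using f by auto
      have m1V: "m1 \<in> L_verts n" unfolding m1_def using L_vert_mem xz xr zr by blast
      have m2V: "m2 \<in> L_verts n" unfolding m2_def using L_vert_mem[of z x n] xz xr zr by (simp add: insert_commute)
      have a12: "L_adj m1 m2" unfolding m1_def m2_def L_adj_def using xz by auto
      have a1: "u \<noteq> m1 \<Longrightarrow> L_adj u m1" unfolding m1_def L_adj_def using ue by auto
      have a2: "m2 \<noteq> v \<Longrightarrow> L_adj m2 v" unfolding m2_def L_adj_def using vf by auto
      consider "u = m1" "m2 = v" | "u = m1" "m2 \<noteq> v" | "u \<noteq> m1" "m2 = v" | "u \<noteq> m1" "m2 \<noteq> v" by blast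
      then show ?thesis
      proof cases
        case 1
        then show ?thesis using gdist_le[of "L_verts n" L_adj "[u,v]" u v 1] u v a12
          by (simp add: walk_single walk_Cons2)
      next
        case 2
        then show ?thesis using gdist_le[of "L_verts n" L_adj "[u,m2,v]" u v 2] u v a12 a2 m2V
          by (simp add: walk_single walk_Cons2)
      next
        case 3
        then show ?thesis using gdist_le[of "L_verts n" L_adj "[u,m1,v]" u v 2] u v a12 a1 m1V
          by (simp add: walk_single walk_Cons2)
      next
        case 4
        then show ?thesis using gdist_le[of "L_verts n" L_adj "[u,m1,m2,v]" u v 3] u v a12 a1 a2 m1V m2V
          by (simp add: walk_single walk_Cons2)
      qed
    qed
  qed
qed

lemma L_fst_in: "u \<in> L_verts n \<Longrightarrow> fst u \<in> snd u"
  unfolding L_verts_def by auto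

lemma nbhd_eq:
  assumes r: "1 \<le> r" "r \<le> n"
  shows "nbhd (L_verts n) L_adj (W n r) = (\<lambda>k. (k, {k, r})) ` ({1..n} - {r})"
proof
  show "nbhd (L_verts n) L_adj (W n r) \<subseteq> (\<lambda>k. (k, {k, r})) ` ({1..n} - {r})"
  proof
    fix u assume u: "u \<in> nbhd (L_verts n) L_adj (W n r)"
    obtain k e where ue: "u = (k, e)" by (cases u)
    have uV: "u \<in> L_verts n" and uW: "u \<notin> W n r" using u unfolding nbhd_def by auto
    obtain w where wW: "w \<in> W n r" and aw: "L_adj u w" using u unfolding nbhd_def by auto
    have kr: "k \<noteq> r" using uV uW ue unfolding W_def by auto
    obtain i j where e: "1 \<le> i" "i < j" "j \<le> n" "e = {i, j}" "k \<in> e" using uV ue unfolding L_verts_def by auto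
    have wr: "fst w = r" "w \<in> L_verts n" using wW unfolding W_def by auto
    have "snd w = e" using aw kr wr ue unfolding L_adj_def by auto
    then have "r \<in> e" using L_fst_in[OF wr(2)] wr by simp
    then have "e = {k, r}" using e kr by auto
    moreover have "k \<in> {1..n} - {r}" using e kr by auto
    ultimately show "u \<in> (\<lambda>k. (k, {k, r})) ` ({1..n} - {r})" using ue by blast
  qed
next
  show "(\<lambda>k. (k, {k, r})) ` ({1..n} - {r}) \<subseteq> nbhd (L_verts n) L_adj (W n r)"
  proof
    fix u assume "u \<in> (\<lambda>k. (k, {k, r})) ` ({1..n} - {r})"
    then obtain k where k: "k \<in> {1..n}" "k \<noteq> r" and ue: "u = (k, {k, r})" by blast
    have uV: "u \<in> L_verts n" using L_vert_mem[of k r n] k r ue by auto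
    have wV: "(r, {k, r}) \<in> L_verts n" using L_vert_mem[of r k n] k r by (simp add: insert_commute)
    then have wW: "(r, {k, r}) \<in> W n r" unfolding W_def by simp
    have "u \<notin> W n r" using ue k unfolding W_def by auto
    moreover have "L_adj u (r, {k, r})" using ue k unfolding L_adj_def by auto
    ultimately show "u \<in> nbhd (L_verts n) L_adj (W n r)" unfolding nbhd_def using uV wW by blast
  qed
qed

theorem proposition3p3:
  fixes n r :: nat
  assumes "n \<ge> 5" and "1 \<le> r" and "r \<le> n"
  shows "card (nbhd (L_verts n) L_adj (W n r)) = n - 1 \<and>
         \<not> strong_resolving_set (L_verts n) L_adj (nbhd (L_verts n) L_adj (W n r))"
proof
  have inj: "inj_on (\<lambda>k. (k, {k, r})) ({1..n} - {r})" by (rule inj_onI) auto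
  show "card (nbhd (L_verts n) L_adj (W n r)) = n - 1"
    unfolding nbhd_eq[OF assms(2,3)] card_image[OF inj] using assms by simp
next
  define a where "a = (if r = 1 then 5 else (1::nat))"
  define b where "b = (if r = 2 then 5 else (2::nat))"
  define c where "c = (if r = 3 then 5 else (3::nat))"
  define d where "d = (if r = 4 then 5 else (4::nat))"
  have dist: "a \<noteq> b" "a \<noteq> c" "a \<noteq> d" "b \<noteq> c" "b \<noteq> d" "c \<noteq> d"
    "a \<noteq> r" "b \<noteq> r" "c \<noteq> r" "d \<noteq> r"
    unfolding a_def b_def c_def d_def by auto
  have rng: "1 \<le> a \<and> a \<le> n" "1 \<le> b \<and> b \<le> n" "1 \<le> c \<and> c \<le> n" "1 \<le> d \<and> d \<le> n"
    unfolding a_def b_def c_def d_def using assms(1) by auto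
  define p where "p = (a, {a, b})"
  define q where "q = (c, {c, d})"
  have pV: "p \<in> L_verts n" unfolding p_def using L_vert_mem dist rng by blast
  have qV: "q \<in> L_verts n" unfolding q_def using L_vert_mem dist rng by blast
  have pq: "p \<noteq> q" unfolding p_def q_def using dist by auto
  have nadj1: "\<not> L_adj q p" unfolding p_def q_def L_adj_def using dist by (auto simp: doubleton_eq_iff)
  have nadj2: "\<not> L_adj p q" unfolding p_def q_def L_adj_def using dist by (auto simp: doubleton_eq_iff)
  have ncom1: "\<forall>w\<in>L_verts n. \<not> (L_adj q w \<and> L_adj w p)"
  proof (intro ballI notI)
    fix w assume wV: "w \<in> L_verts n" and h: "L_adj q w \<and> L_adj w p"
    have "fst w \<in> snd w" using L_fst_in[OF wV] .
    then show False using h dist unfolding p_def q_def L_adj_def by (auto simp: doubleton_eq_iff)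
  qed
  have ncom2: "\<forall>w\<in>L_verts n. \<not> (L_adj p w \<and> L_adj w q)"
  proof (intro ballI notI)
    fix w assume wV: "w \<in> L_verts n" and h: "L_adj p w \<and> L_adj w q"
    have "fst w \<in> snd w" using L_fst_in[OF wV] .
    then show False using h dist unfolding p_def q_def L_adj_def by (auto simp: doubleton_eq_iff)
  qed
  show "\<not> strong_resolving_set (L_verts n) L_adj (nbhd (L_verts n) L_adj (W n r))"
  proof
    assume srs: "strong_resolving_set (L_verts n) L_adj (nbhd (L_verts n) L_adj (W n r))"
    then have sub: "nbhd (L_verts n) L_adj (W n r) \<subseteq> L_verts n" unfolding strong_resolving_set_def by blast
    obtain s where sN: "s \<in> nbhd (L_verts n) L_adj (W n r)"
      and os: "on_shortest (L_verts n) L_adj p q s \<or> on_shortest (L_verts n) L_adj q p s"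
      using srs pV qV pq unfolding strong_resolving_set_def by blast
    have sV: "s \<in> L_verts n" using sN sub by blast
    obtain k where k: "k \<noteq> r" and se: "s = (k, {k, r})"
      using sN unfolding nbhd_eq[OF assms(2,3)] by auto
    have ps: "p \<noteq> s" unfolding p_def se using dist k by (auto simp: doubleton_eq_iff)
    have qs: "q \<noteq> s" unfolding q_def se using dist k by (auto simp: doubleton_eq_iff)
    show False using os
    proof
      assume "on_shortest (L_verts n) L_adj p q s"
      then show False using key[OF _ pq ps nadj1 ncom1 L_gdist_le3[OF qV sV]] by blast
    next
      assume "on_shortest (L_verts n) L_adj q p s"
      then show False using key[OF _ pq[symmetric] qs nadj2 ncom2 L_gdist_le3[OF pV sV]] by blast
    qed
  qed
qed

end
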